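(* Let $n\ge 1$ and let $R_n=\{s_1,\dots,s_n\}$, where $s_1=0$ and $s_i=1\,0^{i-2}\,1$ for $2\le i\le n$. Then for every code $C_n\in\mathbb{S}_n$, every codeword of $C_n$ has some codeword of $R_n$ as a prefix.
   Context: All strings are finite binary strings; $0^{r}$ denotes the string of $r$ zeros and $|w|$ the length of $w$. A palindrome is a string equal to its reversal. A symmetric fix-free code is a finite set of binary palindromes no one of which is a proper prefix of another. $\mathbb{S}_n$ denotes the set of symmetric fix-free codes with exactly $n$ codewords which do not contain the one-bit string $1$ and all of whose codewords have length at most $n$. "Prefix" includes the case of equality. *)

theory Defs
  imports Main "HOL-Library.Sublist"
begin

text \<open>Binary strings are lists of booleans: False = bit 0, True = bit 1.\<close>

definition palindrome :: "bool list \<Rightarrow> bool" where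
  "palindrome w \<longleftrightarrow> rev w = w"

definition proper_prefix :: "bool list \<Rightarrow> bool list \<Rightarrow> bool" where
  "proper_prefix u v \<longleftrightarrow> prefix u v \<and> u \<noteq> v"

definition symmetric_fix_free :: "bool list set \<Rightarrow> bool" where
  "symmetric_fix_free C \<longleftrightarrow> finite C \<and> (\<forall>w\<in>C. w \<noteq> [] \<and> palindrome w)
     \<and> (\<forall>u\<in>C. \<forall>v\<in>C. \<not> proper_prefix u v)"

definition S_codes :: "nat \<Rightarrow> bool list set set" where
  "S_codes n = {C. symmetric_fix_free C \<and> card C = n \<and> [True] \<notin> C
                   \<and> (\<forall>w\<in>C. length w \<le> n)}"

definition s_word :: "nat \<Rightarrow> bool list" where
  "s_word i = (if i = 1 then [False] else [True] @ replicate (i - 2) False @ [True])"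

definition R_code :: "nat \<Rightarrow> bool list set" where
  "R_code n = s_word ` {1..n}"

end

theory Submission
  imports Defs
begin

lemma split_first_true:
  assumes "True \<in> set t"
  shows "\<exists>k rest. t = replicate k False @ True # rest"
  using assms
proof (induction t)
  case Nil then show ?case by simp
next
  case (Cons a t)
  show ?case
  proof (cases a)
    case True
    then show ?thesis by (rule_tac x=0 in exI) auto
  next
    case False
    with Cons obtain k rest where "t = replicate k False @ True # rest" by auto
    with False show ?thesis by (rule_tac x="Suc k" in exI) auto
  qed
qed

theorem lemma1:
  fixes n :: nat and C :: "bool list set"
  assumes "n \<ge> 1" and "C \<in> S_codes n"
  shows "\<forall>w\<in>C. \<exists>s\<in>R_code n. prefix s w"
proof
  fix w assume w: "w \<in> C"
  have ne: "w \<noteq> []" and pal: "rev w = w" and len: "length w \<le> n" and nt: "w \<noteq> [True]"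
    using assms(2) w by (auto simp: S_codes_def symmetric_fix_free_def palindrome_def)
  obtain a t where wt: "w = a # t" using ne by (cases w) auto
  show "\<exists>s\<in>R_code n. prefix s w"
  proof (cases a)
    case False
    have "s_word 1 \<in> R_code n" using assms(1) by (auto simp: R_code_def)
    moreover have "prefix (s_word 1) w" using False wt by (simp add: s_word_def)
    ultimately show ?thesis by blast
  next
    case True
    have tne: "t \<noteq> []" using nt wt True by auto
    have "last w = True" using pal wt True by (metis last_rev list.sel(1) hd_rev rev.simps(2) last_snoc)
    hence "last t = True" using tne wt by simp
    hence "True \<in> set t" using tne by (metis last_in_set)
    then obtain k rest where t: "t = replicate k False @ True # rest"
      using split_first_true by blast
    have "prefix (s_word (k+2)) w" using wt True t by (simp add: s_word_def)
    moreover have "k + 2 \<le> n" using len wt t by simp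
    hence "s_word (k+2) \<in> R_code n" by (auto simp: R_code_def)
    ultimately show ?thesis by blast
  qed
qed

end
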